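(* Let $(Q,\circ)$ be a group with identity $e$, and let $(Q,\star)$ be a right modular, unipotent magma with a left unit $\hat{e}$. If $(Q,\circ)$ and $(Q,\star)$ are double magma partners, i.e. $(x\circ y)\star(z\circ w)=(x\star z)\circ(y\star w)$ for all $x,y,z,w\in Q$, then $(Q,\circ)$ is abelian and $x\star y=x^{-1}\circ y$ for all $x,y\in Q$.
   Context: A magma $(Q,\star)$ is right modular if $(x\star y)\star z=(z\star y)\star x$ for all $x,y,z$; unipotent if $x\star x=y\star y$ for all $x,y$; $\hat{e}$ is a left unit if $\hat{e}\star x=x$ for all $x$. *)

theory Defs
  imports "HOL-Algebra.Group"
begin

definition right_modular :: "'a set \<Rightarrow> ('a \<Rightarrow> 'a \<Rightarrow> 'a) \<Rightarrow> bool" where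
  "right_modular Q s \<longleftrightarrow> (\<forall>x\<in>Q. \<forall>y\<in>Q. \<forall>z\<in>Q. s (s x y) z = s (s z y) x)"

definition unipotent :: "'a set \<Rightarrow> ('a \<Rightarrow> 'a \<Rightarrow> 'a) \<Rightarrow> bool" where
  "unipotent Q s \<longleftrightarrow> (\<forall>x\<in>Q. \<forall>y\<in>Q. s x x = s y y)"

definition is_left_unit :: "'a set \<Rightarrow> ('a \<Rightarrow> 'a \<Rightarrow> 'a) \<Rightarrow> 'a \<Rightarrow> bool" where
  "is_left_unit Q s u \<longleftrightarrow> u \<in> Q \<and> (\<forall>x\<in>Q. s u x = x)"

definition double_magma_partners :: "('a, 'b) monoid_scheme \<Rightarrow> ('a \<Rightarrow> 'a \<Rightarrow> 'a) \<Rightarrow> bool" where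
  "double_magma_partners G s \<longleftrightarrow>
     (\<forall>x\<in>carrier G. \<forall>y\<in>carrier G. \<forall>z\<in>carrier G. \<forall>w\<in>carrier G.
        s (x \<otimes>\<^bsub>G\<^esub> y) (z \<otimes>\<^bsub>G\<^esub> w) = (s x z) \<otimes>\<^bsub>G\<^esub> (s y w))"

end

theory Submission
  imports Defs
begin

lemma helper6p2:
  fixes G (structure) and s :: "'a \<Rightarrow> 'a \<Rightarrow> 'a" and u :: 'a
  assumes "group G"
    and "\<forall>x\<in>carrier G. \<forall>y\<in>carrier G. s x y \<in> carrier G"
    and "right_modular (carrier G) s"
    and "unipotent (carrier G) s"
    and "is_left_unit (carrier G) s u"
    and "double_magma_partners G s"
  shows "comm_group G \<and> (\<forall>x\<in>carrier G. \<forall>y\<in>carrier G. s x y = inv\<^bsub>G\<^esub> x \<otimes>\<^bsub>G\<^esub> y)"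
proof -
  interpret group G by fact
  have cl: "\<And>x y. x \<in> carrier G \<Longrightarrow> y \<in> carrier G \<Longrightarrow> s x y \<in> carrier G" using assms(2) by blast
  have ic: "\<And>x y z w. x \<in> carrier G \<Longrightarrow> y \<in> carrier G \<Longrightarrow> z \<in> carrier G \<Longrightarrow> w \<in> carrier G
     \<Longrightarrow> s (x \<otimes> y) (z \<otimes> w) = s x z \<otimes> s y w"
    using assms(6) unfolding double_magma_partners_def by blast
  have u: "u \<in> carrier G" "\<And>x. x \<in> carrier G \<Longrightarrow> s u x = x"
    using assms(5) unfolding is_left_unit_def by auto
  have uni: "\<And>x. x \<in> carrier G \<Longrightarrow> s x x = s \<one> \<one>"
    using assms(4) unfolding unipotent_def by blast
  have ee: "s \<one> \<one> = \<one>"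
  proof -
    have "s \<one> \<one> = s \<one> \<one> \<otimes> s \<one> \<one>" using ic[of \<one> \<one> \<one> \<one>] by simp
    thus ?thesis using cl[of \<one> \<one>] l_cancel_one'[of "s \<one> \<one>" "s \<one> \<one>"] by simp
  qed
  have split1: "s x w = s x \<one> \<otimes> s \<one> w" if "x \<in> carrier G" "w \<in> carrier G" for x w
    using ic[of x \<one> \<one> w] by (simp add: that)
  have split2: "s x w = s \<one> w \<otimes> s x \<one>" if "x \<in> carrier G" "w \<in> carrier G" for x w
    using ic[of \<one> x w \<one>] by (simp add: that)
  have ahom: "s (x \<otimes> y) \<one> = s x \<one> \<otimes> s y \<one>" if "x \<in> carrier G" "y \<in> carrier G" for x y
    using ic[of x y \<one> \<one>] ee by (simp add: that)
  have b: "\<And>x. x \<in> carrier G \<Longrightarrow> s \<one> x = x"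
  proof -
    fix x assume x: "x \<in> carrier G"
    have "s u \<one> = \<one>" using u by simp
    moreover have "s u x = s u \<one> \<otimes> s \<one> x" using split1[OF u(1) x] .
    ultimately show "s \<one> x = x" using u x cl by simp
  qed
  have a: "\<And>x. x \<in> carrier G \<Longrightarrow> s x \<one> = inv x"
  proof -
    fix x assume x: "x \<in> carrier G"
    have "\<one> = s x \<one> \<otimes> x" using split1[OF x x] uni[OF x] ee b[OF x] by simp
    thus "s x \<one> = inv x" using x cl[OF x one_closed] by (metis inv_equality)
  qed
  have sf: "\<forall>x\<in>carrier G. \<forall>y\<in>carrier G. s x y = inv x \<otimes> y"
  proof (intro ballI)
    fix x y assume x: "x \<in> carrier G" and y: "y \<in> carrier G"
    show "s x y = inv x \<otimes> y" using split1[OF x y] a[OF x] b[OF y] by simp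
  qed
  have "comm_group G"
  proof (rule group_comm_groupI)
    fix x y assume x: "x \<in> carrier G" and y: "y \<in> carrier G"
    have "inv x \<otimes> y = y \<otimes> inv x" using split1[OF x y] split2[OF x y] a[OF x] b[OF y] by simp
    hence "inv x \<otimes> y \<otimes> x = y \<otimes> inv x \<otimes> x" by simp
    hence h: "inv x \<otimes> (y \<otimes> x) = y" using x y by (simp add: m_assoc)
    have "y \<otimes> x = x \<otimes> (inv x \<otimes> (y \<otimes> x))" using x y by (simp add: m_assoc[symmetric])
    thus "x \<otimes> y = y \<otimes> x" using h by simp
  qed
  with sf show ?thesis by simp
qed


theorem theorem6p2:
  fixes G :: "('a, 'b) monoid_scheme" and s :: "'a \<Rightarrow> 'a \<Rightarrow> 'a" and u :: 'a
  assumes "group G"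
    and "\<forall>x\<in>carrier G. \<forall>y\<in>carrier G. s x y \<in> carrier G"
    and "right_modular (carrier G) s"
    and "unipotent (carrier G) s"
    and "is_left_unit (carrier G) s u"
    and "double_magma_partners G s"
  shows "comm_group G \<and> (\<forall>x\<in>carrier G. \<forall>y\<in>carrier G. s x y = inv\<^bsub>G\<^esub> x \<otimes>\<^bsub>G\<^esub> y)"
  using helper6p2[OF assms] .

end
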